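(* Let $[X,\mathcal B,m^i,\nu_i]$ ($i=1,2$) be reversible random walk spaces on the same measurable space with $\nu_2\ll\nu_1$, $\mu=\frac{d\nu_2}{d\nu_1}\in L^\infty(X,\nu_1)$, $\mu>0$ $\nu_1$-a.e., and $\nu_1(X)<\infty$. Assume $\mathcal F_{1,m^1}$ satisfies a $2$-Poincaré inequality with constant $\lambda_2(\mathcal F_{1,m^1})>0$. For $u_0\in L^2(X,\nu_1)$, let $u$ be the strong solution of $u_t-\Delta_1^{m^1}u-\mu\Delta_1^{m^2}u\ni0$, $u(0)=u_0$. Then $$\|u(t)-\overline{u_0}\|_{L^2(X,\nu_1)}\le\big(\|u_0-\overline{u_0}\|_{L^2(X,\nu_1)}-\lambda_2(\mathcal F_{1,m^1})\,t\big)^+\qquad\forall t>0.$$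
   Context: Random walk space $[X,\mathcal B,m,\nu]$: measurable space with countably generated $\sigma$-algebra, probability measures $m_x$ depending measurably on $x$, $\sigma$-finite invariant measure $\nu$ ($\nu(A)=\int m_x(A)\,d\nu(x)$), reversible if $dm_x(y)d\nu(x)=dm_y(x)d\nu(y)$. $\nabla u(x,y)=u(y)-u(x)$. $\mathcal F_{1,m}(u)=\frac12\int_{X\times X}|\nabla u|\,dm_x(y)d\nu(x)$ ($+\infty$ if infinite); $(u,v)\in\Delta_1^m$ iff $(u,-v)\in\partial_{L^2(X,\nu)}\mathcal F_{1,m}(u)$. $\overline{u}=\frac1{\nu_1(X)}\int_X u\,d\nu_1$. $r$-Poincaré inequality: $\lambda_r(\mathcal F_{1,m^1})\|u-\overline u\|_{L^r(X,\nu_1)}\le\mathcal F_{1,m^1}(u)$ for all $u\in L^r(X,\nu_1)$, some $\lambda_r>0$. The operator $A=-\Delta_1^{m^1}-\mu\Delta_1^{m^2}$ on $H=L^2(X,\nu_1)$: $(u,v)\in A$ iff $u,v\in H$, $v=v_1-\mu w$ with $(u,-v_1)\in\Delta_1^{m^1}$ (w.r.t. $\nu_1$) and $(u,w)\in\Delta_1^{m^2}$ (w.r.t. $\nu_2$). Strong solution: $u\in C([0,\infty);H)\cap W^{1,2}_{\rm loc}(0,\infty;H)$, $u(0)=u_0$, $-u_t(t)\in A(u(t))$ for a.e. $t$. *)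

theory Defs
  imports "HOL-Probability.Probability"
begin

definition countably_generated :: "'a measure \<Rightarrow> bool" where
  "countably_generated M \<longleftrightarrow>
     (\<exists>G. countable G \<and> G \<subseteq> Pow (space M) \<and> sets M = sigma_sets (space M) G)"

definition random_walk_space :: "'a measure \<Rightarrow> ('a \<Rightarrow> 'a measure) \<Rightarrow> 'a measure \<Rightarrow> bool" where
  "random_walk_space M m \<nu> \<longleftrightarrow>
     countably_generated M \<and>
     sets \<nu> = sets M \<and>
     (\<forall>x\<in>space M. prob_space (m x) \<and> sets (m x) = sets M) \<and>
     (\<forall>A\<in>sets M. (\<lambda>x. emeasure (m x) A) \<in> borel_measurable M) \<and>
     sigma_finite_measure \<nu> \<and>
     (\<forall>A\<in>sets M. emeasure \<nu> A = (\<integral>\<^sup>+ x. emeasure (m x) A \<partial>\<nu>))"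

text \<open>Reversibility: the measures dm_x(y) dnu(x) and dm_y(x) dnu(y) on X x X coincide,
  expressed by testing against all nonnegative measurable functions.\<close>
definition reversible :: "'a measure \<Rightarrow> ('a \<Rightarrow> 'a measure) \<Rightarrow> 'a measure \<Rightarrow> bool" where
  "reversible M m \<nu> \<longleftrightarrow>
     (\<forall>f :: 'a \<times> 'a \<Rightarrow> ennreal. f \<in> borel_measurable (M \<Otimes>\<^sub>M M) \<longrightarrow>
        (\<integral>\<^sup>+ x. (\<integral>\<^sup>+ y. f (x, y) \<partial>m x) \<partial>\<nu>) = (\<integral>\<^sup>+ x. (\<integral>\<^sup>+ y. f (y, x) \<partial>m x) \<partial>\<nu>))"

definition L2 :: "'a measure \<Rightarrow> ('a \<Rightarrow> real) \<Rightarrow> bool" where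
  "L2 \<nu> u \<longleftrightarrow> u \<in> borel_measurable \<nu> \<and> integrable \<nu> (\<lambda>x. (u x)\<^sup>2)"

definition L2norm :: "'a measure \<Rightarrow> ('a \<Rightarrow> real) \<Rightarrow> real" where
  "L2norm \<nu> u = sqrt (\<integral>x. (u x)\<^sup>2 \<partial>\<nu>)"

definition mean :: "'a measure \<Rightarrow> ('a \<Rightarrow> real) \<Rightarrow> real" where
  "mean \<nu> u = (1 / measure \<nu> (space \<nu>)) * (\<integral>x. u x \<partial>\<nu>)"

definition F1 :: "'a measure \<Rightarrow> ('a \<Rightarrow> 'a measure) \<Rightarrow> ('a \<Rightarrow> real) \<Rightarrow> ennreal" where
  "F1 \<nu> m u = ennreal (1/2) * (\<integral>\<^sup>+ x. (\<integral>\<^sup>+ y. ennreal \<bar>u y - u x\<bar> \<partial>m x) \<partial>\<nu>)"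

definition subdiff_L2 :: "'a measure \<Rightarrow> (('a \<Rightarrow> real) \<Rightarrow> ennreal) \<Rightarrow> ('a \<Rightarrow> real) \<Rightarrow> ('a \<Rightarrow> real) \<Rightarrow> bool" where
  "subdiff_L2 \<nu> F u v \<longleftrightarrow> L2 \<nu> u \<and> L2 \<nu> v \<and>
     (\<forall>w. L2 \<nu> w \<longrightarrow>
        enn2ereal (F u) + ereal (\<integral>x. v x * (w x - u x) \<partial>\<nu>) \<le> enn2ereal (F w))"

definition Delta1 :: "'a measure \<Rightarrow> ('a \<Rightarrow> 'a measure) \<Rightarrow> ('a \<Rightarrow> real) \<Rightarrow> ('a \<Rightarrow> real) \<Rightarrow> bool" where
  "Delta1 \<nu> m u v \<longleftrightarrow> subdiff_L2 \<nu> (F1 \<nu> m) u (\<lambda>x. - v x)"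

text \<open>The operator A = -Delta_1^{m1} - mu Delta_1^{m2} on H = L^2(X,nu1).\<close>
definition opA :: "'a measure \<Rightarrow> 'a measure \<Rightarrow> ('a \<Rightarrow> 'a measure) \<Rightarrow> ('a \<Rightarrow> 'a measure)
      \<Rightarrow> ('a \<Rightarrow> real) \<Rightarrow> ('a \<Rightarrow> real) \<Rightarrow> ('a \<Rightarrow> real) \<Rightarrow> bool" where
  "opA \<nu>1 \<nu>2 m1 m2 \<mu> u v \<longleftrightarrow> L2 \<nu>1 u \<and> L2 \<nu>1 v \<and>
     (\<exists>v1 w. Delta1 \<nu>1 m1 u (\<lambda>x. - v1 x) \<and> Delta1 \<nu>2 m2 u w \<and>
        (AE x in \<nu>1. v x = v1 x - \<mu> x * w x))"

definition cont_L2 :: "'a measure \<Rightarrow> (real \<Rightarrow> 'a \<Rightarrow> real) \<Rightarrow> bool" where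
  "cont_L2 \<nu> u \<longleftrightarrow> (\<forall>t\<ge>0. L2 \<nu> (u t)) \<and>
     (\<forall>t\<ge>0. ((\<lambda>s. L2norm \<nu> (\<lambda>x. u s x - u t x)) \<longlongrightarrow> 0) (at t within {0..}))"

text \<open>u \<in> W^{1,2}_loc(0,\<infinity>; L^2(X,nu)) with (weak = strong a.e.) derivative g:
  g is L^2(X,nu)-valued, \<integral>_s^t ||g(r)||^2 dr < \<infinity> on compacts of (0,\<infinity>), and
  u(t) - u(s) = \<integral>_s^t g(r) dr in L^2(X,nu), expressed by testing against every
  phi \<in> L^2(X,nu) (Pettis; L^2(X,nu) is separable here).\<close>
definition W12loc_deriv :: "'a measure \<Rightarrow> (real \<Rightarrow> 'a \<Rightarrow> real) \<Rightarrow> (real \<Rightarrow> 'a \<Rightarrow> real) \<Rightarrow> bool" where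
  "W12loc_deriv \<nu> u g \<longleftrightarrow>
     (\<forall>r>0. L2 \<nu> (u r) \<and> L2 \<nu> (g r)) \<and>
     (\<forall>s t. 0 < s \<longrightarrow> s \<le> t \<longrightarrow>
        (\<integral>\<^sup>+ r\<in>{s..t}. ennreal ((L2norm \<nu> (g r))\<^sup>2) \<partial>lborel) < \<infinity>) \<and>
     (\<forall>\<phi>. L2 \<nu> \<phi> \<longrightarrow> (\<forall>s t. 0 < s \<longrightarrow> s \<le> t \<longrightarrow>
        set_integrable lborel {s..t} (\<lambda>r. \<integral>x. g r x * \<phi> x \<partial>\<nu>) \<and>
        (\<integral>x. (u t x - u s x) * \<phi> x \<partial>\<nu>) = (LINT r:{s..t}|lborel. (\<integral>x. g r x * \<phi> x \<partial>\<nu>))))"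

definition strong_solution :: "'a measure \<Rightarrow> 'a measure \<Rightarrow> ('a \<Rightarrow> 'a measure) \<Rightarrow> ('a \<Rightarrow> 'a measure)
      \<Rightarrow> ('a \<Rightarrow> real) \<Rightarrow> ('a \<Rightarrow> real) \<Rightarrow> (real \<Rightarrow> 'a \<Rightarrow> real) \<Rightarrow> bool" where
  "strong_solution \<nu>1 \<nu>2 m1 m2 \<mu> u0 u \<longleftrightarrow>
     cont_L2 \<nu>1 u \<and>
     (AE x in \<nu>1. u 0 x = u0 x) \<and>
     (\<exists>g. W12loc_deriv \<nu>1 u g \<and>
        (AE t in lborel. t > 0 \<longrightarrow> opA \<nu>1 \<nu>2 m1 m2 \<mu> (u t) (\<lambda>x. - g t x)))"

end

theory Submission
  imports Defs
begin


lemma delta_bound: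
  fixes X a b :: real
  assumes H: "\<And>d. d > 0 \<Longrightarrow> X \<le> a / d + d * b" and a: "a \<ge> 0" and b: "b \<ge> 0"
  shows "X \<le> 2 * sqrt (a * b)"
proof (cases "a > 0 \<and> b > 0")
  case True
  define d where "d = sqrt (a / b)"
  have d: "d > 0" using True by (simp add: d_def)
  have "a / d = sqrt (a * b)" using True unfolding d_def
    by (metis less_eq_real_def real_div_sqrt real_sqrt_divide real_sqrt_mult times_divide_eq_right divide_divide_eq_right mult.commute real_sqrt_gt_0_iff real_sqrt_mult_self)
  moreover have "d * b = sqrt (a * b)" using True unfolding d_def
    by (metis less_eq_real_def real_div_sqrt real_sqrt_divide real_sqrt_mult times_divide_eq_left mult.commute real_sqrt_mult_self)
  ultimately show ?thesis using H[OF d] by simp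
next
  case False
  hence ab: "a * b = 0" using a b by auto
  have "X \<le> 0"
  proof (rule ccontr)
    assume X: "\<not> X \<le> 0"
    show False
    proof (cases "a = 0")
      case True
      define d where "d = X / (2 * (b + 1))"
      have d: "d > 0" using X b by (simp add: d_def)
      have X0: "X > 0" using X by simp
      have "0 < X * b + X * 2" using X0 b by (simp add: add_nonneg_pos)
      hence "d * b < X" using X0 b unfolding d_def by (simp add: field_simps)
      thus False using H[OF d] True by simp
    next
      case False
      hence b0: "b = 0" using ab by simp
      define d where "d = 2 * a / X + 1"
      have d: "d > 0" using X a by (simp add: d_def add_nonneg_pos)
      have X0: "X > 0" using X by simp
      have "0 < X * X + X * a" using X0 a by (simp add: add_pos_nonneg)
      hence "a / d < X" using X a d unfolding d_def by (simp add: field_simps)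
      thus False using H[OF d] b0 by simp
    qed
  qed
  thus ?thesis using ab by auto
qed

lemma abs_mult_le_sq:
  fixes f g d :: real assumes "d > 0"
  shows "\<bar>f * g\<bar> \<le> f\<^sup>2 / (2 * d) + d * g\<^sup>2 / 2"
proof -
  have "0 \<le> (\<bar>f\<bar> - d * \<bar>g\<bar>)\<^sup>2" by simp
  hence "2 * d * \<bar>f * g\<bar> \<le> f\<^sup>2 + d\<^sup>2 * g\<^sup>2"
    by (simp add: power2_eq_square algebra_simps abs_mult)
  thus ?thesis using assms by (simp add: field_simps power2_eq_square)
qed

lemma L2_meas[measurable_dest]: "L2 \<nu> f \<Longrightarrow> f \<in> borel_measurable \<nu>"
  by (simp add: L2_def)

lemma L2_sq: "L2 \<nu> f \<Longrightarrow> integrable \<nu> (\<lambda>x. (f x)\<^sup>2)"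
  by (simp add: L2_def)

lemma L2_mult_int:
  assumes f: "L2 \<nu> f" and g: "L2 \<nu> g"
  shows "integrable \<nu> (\<lambda>x. f x * g x)"
proof (rule Bochner_Integration.integrable_bound)
  show "integrable \<nu> (\<lambda>x. (f x)\<^sup>2 / 2 + (g x)\<^sup>2 / 2)"
    using L2_sq[OF f] L2_sq[OF g] by auto
  show "(\<lambda>x. f x * g x) \<in> borel_measurable \<nu>" using f g by (simp add: L2_def borel_measurable_times)
  show "AE x in \<nu>. norm (f x * g x) \<le> norm ((f x)\<^sup>2 / 2 + (g x)\<^sup>2 / 2)"
    using abs_mult_le_sq[of 1] by (auto simp: field_simps)
qed

lemma L2_add:
  assumes f: "L2 \<nu> f" and g: "L2 \<nu> g" shows "L2 \<nu> (\<lambda>x. f x + g x)"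
proof -
  have e: "(\<lambda>x. (f x + g x)\<^sup>2) = (\<lambda>x. (f x)\<^sup>2 + (g x)\<^sup>2 + 2 * (f x * g x))"
    by (simp add: power2_sum mult.assoc)
  show ?thesis unfolding L2_def e
    using L2_mult_int[OF f g] L2_sq[OF f] L2_sq[OF g] f g
    by (auto simp: L2_def intro!: Bochner_Integration.integrable_add borel_measurable_add)
qed

lemma L2_cmult: "L2 \<nu> f \<Longrightarrow> L2 \<nu> (\<lambda>x. c * f x)"
  unfolding L2_def by (simp add: power_mult_distrib borel_measurable_times)

lemma L2_neg: "L2 \<nu> f \<Longrightarrow> L2 \<nu> (\<lambda>x. - f x)"
  unfolding L2_def by simp

lemma L2_diff: "L2 \<nu> f \<Longrightarrow> L2 \<nu> g \<Longrightarrow> L2 \<nu> (\<lambda>x. f x - g x)"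
  using L2_add[of \<nu> f "\<lambda>x. - g x"] L2_neg[of \<nu> g] by simp

lemma L2_abs: "L2 \<nu> f \<Longrightarrow> L2 \<nu> (\<lambda>x. \<bar>f x\<bar>)"
  unfolding L2_def by (simp add: borel_measurable_abs)

lemma L2_const: "finite_measure \<nu> \<Longrightarrow> L2 \<nu> (\<lambda>x. c)"
  unfolding L2_def by (simp add: finite_measure.integrable_const)

lemma L2_int: "finite_measure \<nu> \<Longrightarrow> L2 \<nu> f \<Longrightarrow> integrable \<nu> f"
  using L2_mult_int[of \<nu> f "\<lambda>x. 1"] L2_const[of \<nu> 1] by simp

lemma L2norm_nonneg: "L2norm \<nu> f \<ge> 0"
  unfolding L2norm_def by simp

lemma L2norm_sq: "(L2norm \<nu> f)\<^sup>2 = (\<integral>x. (f x)\<^sup>2 \<partial>\<nu>)"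
  unfolding L2norm_def by simp

lemma CS_abs:
  assumes f: "L2 \<nu> f" and g: "L2 \<nu> g"
  shows "(\<integral>x. \<bar>f x * g x\<bar> \<partial>\<nu>) \<le> L2norm \<nu> f * L2norm \<nu> g"
proof -
  have "(\<integral>x. \<bar>f x * g x\<bar> \<partial>\<nu>) \<le> 2 * sqrt (((\<integral>x. (f x)\<^sup>2 \<partial>\<nu>) / 2) * ((\<integral>x. (g x)\<^sup>2 \<partial>\<nu>) / 2))"
  proof (rule delta_bound)
    fix d :: real assume d: "d > 0"
    have "(\<integral>x. \<bar>f x * g x\<bar> \<partial>\<nu>) \<le> (\<integral>x. (f x)\<^sup>2 / (2 * d) + d * (g x)\<^sup>2 / 2 \<partial>\<nu>)"
      using L2_mult_int[OF f g] L2_sq[OF f] L2_sq[OF g] abs_mult_le_sq[OF d]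
      by (intro integral_mono) auto
    also have "\<dots> = ((\<integral>x. (f x)\<^sup>2 \<partial>\<nu>) / 2) / d + d * ((\<integral>x. (g x)\<^sup>2 \<partial>\<nu>) / 2)"
      using L2_sq[OF f] L2_sq[OF g] by (simp add: field_simps)
    finally show "(\<integral>x. \<bar>f x * g x\<bar> \<partial>\<nu>) \<le> ((\<integral>x. (f x)\<^sup>2 \<partial>\<nu>) / 2) / d + d * ((\<integral>x. (g x)\<^sup>2 \<partial>\<nu>) / 2)" .
  qed (auto)
  also have "\<dots> = L2norm \<nu> f * L2norm \<nu> g"
  proof -
    have s4: "sqrt (4::real) = 2" by simp
    show ?thesis unfolding L2norm_def
      by (simp add: real_sqrt_mult[symmetric] real_sqrt_divide s4)
  qed
  finally show ?thesis .
qed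

lemma CS:
  assumes f: "L2 \<nu> f" and g: "L2 \<nu> g"
  shows "\<bar>\<integral>x. f x * g x \<partial>\<nu>\<bar> \<le> L2norm \<nu> f * L2norm \<nu> g"
  using CS_abs[OF f g] integral_abs_bound[of \<nu> "\<lambda>x. f x * g x"] by linarith

lemma Minkowski:
  assumes f: "L2 \<nu> f" and g: "L2 \<nu> g"
  shows "L2norm \<nu> (\<lambda>x. f x + g x) \<le> L2norm \<nu> f + L2norm \<nu> g"
proof -
  have "(\<integral>x. (f x + g x)\<^sup>2 \<partial>\<nu>) = (\<integral>x. (f x)\<^sup>2 \<partial>\<nu>) + 2 * (\<integral>x. f x * g x \<partial>\<nu>) + (\<integral>x. (g x)\<^sup>2 \<partial>\<nu>)"
  proof -
    have e: "(\<lambda>x. (f x + g x)\<^sup>2) = (\<lambda>x. (f x)\<^sup>2 + (g x)\<^sup>2 + 2 * (f x * g x))"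
      by (simp add: power2_sum mult.assoc)
    show ?thesis unfolding e using L2_sq[OF f] L2_sq[OF g] L2_mult_int[OF f g] by simp
  qed
  also have "\<dots> \<le> (L2norm \<nu> f)\<^sup>2 + 2 * (L2norm \<nu> f * L2norm \<nu> g) + (L2norm \<nu> g)\<^sup>2"
    using CS[OF f g] unfolding L2norm_sq by simp
  also have "\<dots> = (L2norm \<nu> f + L2norm \<nu> g)\<^sup>2" by (simp add: power2_sum)
  finally have "(L2norm \<nu> (\<lambda>x. f x + g x))\<^sup>2 \<le> (L2norm \<nu> f + L2norm \<nu> g)\<^sup>2"
    unfolding L2norm_sq .
  thus ?thesis using L2norm_nonneg[of \<nu> f] L2norm_nonneg[of \<nu> g]
    by (simp add: power2_le_iff_abs_le)
qed

lemma L2norm_diff_tri: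
  assumes f: "L2 \<nu> f" and g: "L2 \<nu> g" and h: "L2 \<nu> h"
  shows "L2norm \<nu> (\<lambda>x. f x - h x) \<le> L2norm \<nu> (\<lambda>x. f x - g x) + L2norm \<nu> (\<lambda>x. g x - h x)"
  using Minkowski[OF L2_diff[OF f g] L2_diff[OF g h]] by simp

lemma L2norm_const:
  "finite_measure \<nu> \<Longrightarrow> L2norm \<nu> (\<lambda>x. 1) = sqrt (measure \<nu> (space \<nu>))"
  unfolding L2norm_def by (simp add: finite_measure.integrable_const)

lemma L1_le_L2:
  assumes fm: "finite_measure \<nu>" and f: "L2 \<nu> f"
  shows "(\<integral>x. \<bar>f x\<bar> \<partial>\<nu>) \<le> sqrt (measure \<nu> (space \<nu>)) * L2norm \<nu> f"
  using CS_abs[OF f L2_const[OF fm, of 1]] L2norm_const[OF fm] by (simp add: mult.commute)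



lemma subgrad_props:
  fixes F :: "('a \<Rightarrow> real) \<Rightarrow> ennreal"
  assumes sd: "subdiff_L2 \<nu> F u v" and fm: "finite_measure \<nu>"
    and F0: "F (\<lambda>x. 0) = 0"
    and Fsub: "\<And>a b. L2 \<nu> a \<Longrightarrow> L2 \<nu> b \<Longrightarrow> F (\<lambda>x. a x + b x) \<le> F a + F b"
    and Fconst: "\<And>c. F (\<lambda>x. c) = 0"
    and Fbound: "\<And>z. L2 \<nu> z \<Longrightarrow> F z \<le> ennreal (\<integral>x. \<bar>z x\<bar> \<partial>\<nu>)"
  shows "\<exists>r. F u = ennreal r \<and> 0 \<le> r \<and> r \<le> (\<integral>x. v x * u x \<partial>\<nu>)"
    and "\<And>z. L2 \<nu> z \<Longrightarrow> (\<integral>x. v x * z x \<partial>\<nu>) \<le> (\<integral>x. \<bar>z x\<bar> \<partial>\<nu>)"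
    and "\<And>c. (\<integral>x. v x * c \<partial>\<nu>) = 0"
proof -
  have uL: "L2 \<nu> u" and vL: "L2 \<nu> v"
    and ineq: "\<And>w. L2 \<nu> w \<Longrightarrow> enn2ereal (F u) + ereal (\<integral>x. v x * (w x - u x) \<partial>\<nu>) \<le> enn2ereal (F w)"
    using sd unfolding subdiff_L2_def by auto
  have "enn2ereal (F u) + ereal (\<integral>x. v x * (0 - u x) \<partial>\<nu>) \<le> enn2ereal (F (\<lambda>x. 0))"
    using ineq[OF L2_const[OF fm, of 0]] by simp
  hence i0: "enn2ereal (F u) + ereal (- (\<integral>x. v x * u x \<partial>\<nu>)) \<le> 0" using F0 by (simp add: zero_ennreal.rep_eq)
  have nn: "enn2ereal (F u) \<ge> 0" by simp
  obtain r where r: "enn2ereal (F u) = ereal r"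
  proof (cases "enn2ereal (F u)")
    case (real r) thus ?thesis using that by simp
  next
    case PInf thus ?thesis using i0 by simp
  next
    case MInf thus ?thesis using nn by simp
  qed
  have r0: "0 \<le> r" using nn r by simp
  have Fu: "F u = ennreal r"
    using r enn2ereal_ennreal[OF r0] by (metis enn2ereal_inject)
  show "\<exists>r. F u = ennreal r \<and> 0 \<le> r \<and> r \<le> (\<integral>x. v x * u x \<partial>\<nu>)"
    using i0 r r0 Fu by auto
  have key: "(\<integral>x. v x * z x \<partial>\<nu>) \<le> enn2ereal (F z)" if z: "L2 \<nu> z" for z
  proof -
    have "ereal r + ereal (\<integral>x. v x * ((u x + z x) - u x) \<partial>\<nu>) \<le> enn2ereal (F (\<lambda>x. u x + z x))"
      using ineq[OF L2_add[OF uL z]] r by simp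
    also have "\<dots> \<le> enn2ereal (F u + F z)"
      using Fsub[OF uL z] less_eq_ennreal.rep_eq by blast
    also have "\<dots> = ereal r + enn2ereal (F z)" using r by (simp add: plus_ennreal.rep_eq)
    finally have "ereal r + ereal (\<integral>x. v x * z x \<partial>\<nu>) \<le> ereal r + enn2ereal (F z)" by simp
    thus ?thesis by (cases "enn2ereal (F z)") auto
  qed
  show zb: "(\<integral>x. v x * z x \<partial>\<nu>) \<le> (\<integral>x. \<bar>z x\<bar> \<partial>\<nu>)" if z: "L2 \<nu> z" for z
  proof -
    have "ereal (\<integral>x. v x * z x \<partial>\<nu>) \<le> enn2ereal (F z)" using key[OF z] .
    also have "\<dots> \<le> enn2ereal (ennreal (\<integral>x. \<bar>z x\<bar> \<partial>\<nu>))"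
      using Fbound[OF z] less_eq_ennreal.rep_eq by blast
    also have "\<dots> = ereal (\<integral>x. \<bar>z x\<bar> \<partial>\<nu>)" by (simp add: enn2ereal_ennreal)
    finally show ?thesis by simp
  qed
  fix c :: real
  have a: "(\<integral>x. v x * c \<partial>\<nu>) \<le> 0"
    using key[OF L2_const[OF fm, of c]] Fconst[of c] by (simp add: zero_ennreal.rep_eq)
  have b: "(\<integral>x. v x * (- c) \<partial>\<nu>) \<le> 0"
    using key[OF L2_const[OF fm, of "-c"]] Fconst[of "-c"] by (simp add: zero_ennreal.rep_eq)
  have "(\<integral>x. v x * (- c) \<partial>\<nu>) = - (\<integral>x. v x * c \<partial>\<nu>)" by simp
  thus "(\<integral>x. v x * c \<partial>\<nu>) = 0" using a b by linarith
qed



lemma half_twice_ennreal: "ennreal (1/2) * (X + X) = (X::ennreal)"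
proof -
  have "ennreal (1/2) * (X + X) = (ennreal (1/2) * ennreal 2) * X"
    by (simp add: mult_2[symmetric] mult.assoc)
  also have "ennreal (1/2) * ennreal 2 = ennreal (1/2 * 2)" by (rule ennreal_mult[symmetric]) auto
  also have "\<dots> = 1" by simp
  finally show ?thesis by simp
qed

locale kern =
  fixes M \<nu> :: "'a measure" and m :: "'a \<Rightarrow> 'a measure"
  assumes sets_nu: "sets \<nu> = sets M"
    and kern: "\<forall>x\<in>space M. prob_space (m x) \<and> sets (m x) = sets M"
    and kmeas: "\<forall>A\<in>sets M. (\<lambda>x. emeasure (m x) A) \<in> borel_measurable M"
begin

lemma space_nu: "space \<nu> = space M" using sets_nu by (rule sets_eq_imp_space_eq)

lemma meas_nu: "f \<in> M \<rightarrow>\<^sub>M N \<Longrightarrow> f \<in> \<nu> \<rightarrow>\<^sub>M N"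
  by (subst measurable_cong_sets[OF sets_nu refl])

lemma kernel_meas: "m \<in> measurable M (subprob_algebra M)"
  using kern kmeas by (intro measurable_subprob_algebra) (auto intro: prob_space_imp_subprob_space)

lemma inner_meas:
  assumes f: "f \<in> borel_measurable (M \<Otimes>\<^sub>M M)"
  shows "(\<lambda>x. \<integral>\<^sup>+ y. f (x, y) \<partial>m x) \<in> borel_measurable \<nu>"
proof -
  have "(\<lambda>x. \<integral>\<^sup>+ y. (\<lambda>x y. f (x, y)) x y \<partial>m x) \<in> borel_measurable M"
    by (rule nn_integral_measurable_subprob_algebra2[OF _ kernel_meas]) (simp add: f)
  thus ?thesis by (simp add: meas_nu)
qed

lemma meas_m: "x \<in> space \<nu> \<Longrightarrow> f \<in> borel_measurable M \<Longrightarrow> f \<in> borel_measurable (m x)"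
  using kern space_nu measurable_cong_sets[of "m x" M borel borel] by auto

lemma F1_sub:
  assumes a[measurable]: "a \<in> borel_measurable M" and b[measurable]: "b \<in> borel_measurable M"
  shows "F1 \<nu> m (\<lambda>x. a x + b x) \<le> F1 \<nu> m a + F1 \<nu> m b"
proof -
  have "(\<integral>\<^sup>+ x. (\<integral>\<^sup>+ y. ennreal \<bar>(a y + b y) - (a x + b x)\<bar> \<partial>m x) \<partial>\<nu>)
      \<le> (\<integral>\<^sup>+ x. ((\<integral>\<^sup>+ y. ennreal \<bar>a y - a x\<bar> \<partial>m x) + (\<integral>\<^sup>+ y. ennreal \<bar>b y - b x\<bar> \<partial>m x)) \<partial>\<nu>)"
  proof (rule nn_integral_mono)
    fix x assume x: "x \<in> space \<nu>"
    have "(\<integral>\<^sup>+ y. ennreal \<bar>(a y + b y) - (a x + b x)\<bar> \<partial>m x)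
        \<le> (\<integral>\<^sup>+ y. ennreal \<bar>a y - a x\<bar> + ennreal \<bar>b y - b x\<bar> \<partial>m x)"
      by (intro nn_integral_mono) (simp add: ennreal_plus[symmetric] del: ennreal_plus)
    also have "\<dots> = (\<integral>\<^sup>+ y. ennreal \<bar>a y - a x\<bar> \<partial>m x) + (\<integral>\<^sup>+ y. ennreal \<bar>b y - b x\<bar> \<partial>m x)"
      using meas_m[OF x a] meas_m[OF x b] by (intro nn_integral_add) auto
    finally show "(\<integral>\<^sup>+ y. ennreal \<bar>(a y + b y) - (a x + b x)\<bar> \<partial>m x)
        \<le> (\<integral>\<^sup>+ y. ennreal \<bar>a y - a x\<bar> \<partial>m x) + (\<integral>\<^sup>+ y. ennreal \<bar>b y - b x\<bar> \<partial>m x)" .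
  qed
  also have "\<dots> = (\<integral>\<^sup>+ x. (\<integral>\<^sup>+ y. ennreal \<bar>a y - a x\<bar> \<partial>m x) \<partial>\<nu>) + (\<integral>\<^sup>+ x. (\<integral>\<^sup>+ y. ennreal \<bar>b y - b x\<bar> \<partial>m x) \<partial>\<nu>)"
    using inner_meas[of "\<lambda>(x,y). ennreal \<bar>a y - a x\<bar>"] inner_meas[of "\<lambda>(x,y). ennreal \<bar>b y - b x\<bar>"]
    by (intro nn_integral_add) auto
  finally have A: "(\<integral>\<^sup>+ x. (\<integral>\<^sup>+ y. ennreal \<bar>(a y + b y) - (a x + b x)\<bar> \<partial>m x) \<partial>\<nu>)
      \<le> (\<integral>\<^sup>+ x. (\<integral>\<^sup>+ y. ennreal \<bar>a y - a x\<bar> \<partial>m x) \<partial>\<nu>) + (\<integral>\<^sup>+ x. (\<integral>\<^sup>+ y. ennreal \<bar>b y - b x\<bar> \<partial>m x) \<partial>\<nu>)" .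
  have "F1 \<nu> m (\<lambda>x. a x + b x) \<le> ennreal (1/2) * ((\<integral>\<^sup>+ x. (\<integral>\<^sup>+ y. ennreal \<bar>a y - a x\<bar> \<partial>m x) \<partial>\<nu>) + (\<integral>\<^sup>+ x. (\<integral>\<^sup>+ y. ennreal \<bar>b y - b x\<bar> \<partial>m x) \<partial>\<nu>))"
    unfolding F1_def by (rule mult_left_mono[OF A]) simp
  thus ?thesis unfolding F1_def by (simp only: distrib_left)
qed

lemma F1_bound:
  assumes rev: "reversible M m \<nu>" and z[measurable]: "z \<in> borel_measurable M"
    and zi: "integrable \<nu> z"
  shows "F1 \<nu> m z \<le> ennreal (\<integral>x. \<bar>z x\<bar> \<partial>\<nu>)"
proof -
  have S1: "(\<integral>\<^sup>+ x. (\<integral>\<^sup>+ y. ennreal \<bar>z y - z x\<bar> \<partial>m x) \<partial>\<nu>)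
      \<le> (\<integral>\<^sup>+ x. ((\<integral>\<^sup>+ y. ennreal \<bar>z y\<bar> \<partial>m x) + ennreal \<bar>z x\<bar>) \<partial>\<nu>)"
  proof (rule nn_integral_mono)
    fix x assume x: "x \<in> space \<nu>"
    have ps: "prob_space (m x)" using kern x space_nu by auto
    have c: "(\<integral>\<^sup>+ y. ennreal \<bar>z x\<bar> \<partial>m x) = ennreal \<bar>z x\<bar>"
      using ps by (simp add: prob_space.emeasure_space_1)
    have "(\<integral>\<^sup>+ y. ennreal \<bar>z y - z x\<bar> \<partial>m x) \<le> (\<integral>\<^sup>+ y. ennreal \<bar>z y\<bar> + ennreal \<bar>z x\<bar> \<partial>m x)"
      by (intro nn_integral_mono) (simp add: ennreal_plus[symmetric] del: ennreal_plus)
    also have "\<dots> = (\<integral>\<^sup>+ y. ennreal \<bar>z y\<bar> \<partial>m x) + (\<integral>\<^sup>+ y. ennreal \<bar>z x\<bar> \<partial>m x)"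
      using meas_m[OF x z] by (intro nn_integral_add) auto
    finally show "(\<integral>\<^sup>+ y. ennreal \<bar>z y - z x\<bar> \<partial>m x) \<le> (\<integral>\<^sup>+ y. ennreal \<bar>z y\<bar> \<partial>m x) + ennreal \<bar>z x\<bar>"
      by (simp only: c)
  qed
  have S2: "(\<integral>\<^sup>+ x. ((\<integral>\<^sup>+ y. ennreal \<bar>z y\<bar> \<partial>m x) + ennreal \<bar>z x\<bar>) \<partial>\<nu>)
     = (\<integral>\<^sup>+ x. (\<integral>\<^sup>+ y. ennreal \<bar>z y\<bar> \<partial>m x) \<partial>\<nu>) + (\<integral>\<^sup>+ x. ennreal \<bar>z x\<bar> \<partial>\<nu>)"
  proof -
    have "(\<lambda>(x,y). ennreal \<bar>z y\<bar>) \<in> borel_measurable (M \<Otimes>\<^sub>M M)" by measurable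
    from inner_meas[OF this] have m1: "(\<lambda>x. \<integral>\<^sup>+ y. ennreal \<bar>z y\<bar> \<partial>m x) \<in> borel_measurable \<nu>" by simp
    have m2: "(\<lambda>x. ennreal \<bar>z x\<bar>) \<in> borel_measurable \<nu>" by (rule meas_nu) measurable
    show ?thesis by (rule nn_integral_add[OF m1 m2])
  qed
  have S3: "(\<integral>\<^sup>+ x. (\<integral>\<^sup>+ y. ennreal \<bar>z y\<bar> \<partial>m x) \<partial>\<nu>) = (\<integral>\<^sup>+ x. (\<integral>\<^sup>+ y. ennreal \<bar>z x\<bar> \<partial>m x) \<partial>\<nu>)"
  proof -
    have "(\<lambda>(x,y). ennreal \<bar>z y\<bar>) \<in> borel_measurable (M \<Otimes>\<^sub>M M)" by measurable
    from rev[unfolded reversible_def, rule_format, OF this] show ?thesis by simp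
  qed
  have S4: "(\<integral>\<^sup>+ x. (\<integral>\<^sup>+ y. ennreal \<bar>z x\<bar> \<partial>m x) \<partial>\<nu>) = (\<integral>\<^sup>+ x. ennreal \<bar>z x\<bar> \<partial>\<nu>)"
    using kern space_nu by (intro nn_integral_cong) (simp add: prob_space.emeasure_space_1)
  have S5: "(\<integral>\<^sup>+ x. ennreal \<bar>z x\<bar> \<partial>\<nu>) = ennreal (\<integral>x. \<bar>z x\<bar> \<partial>\<nu>)"
    using zi by (intro nn_integral_eq_integral) auto
  have A: "(\<integral>\<^sup>+ x. (\<integral>\<^sup>+ y. ennreal \<bar>z y - z x\<bar> \<partial>m x) \<partial>\<nu>)
     \<le> ennreal (\<integral>x. \<bar>z x\<bar> \<partial>\<nu>) + ennreal (\<integral>x. \<bar>z x\<bar> \<partial>\<nu>)"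
    using S1 unfolding S2 S3 S4 S5 .
  have "F1 \<nu> m z \<le> ennreal (1/2) * (ennreal (\<integral>x. \<bar>z x\<bar> \<partial>\<nu>) + ennreal (\<integral>x. \<bar>z x\<bar> \<partial>\<nu>))"
    unfolding F1_def by (rule mult_left_mono[OF A]) simp
  thus ?thesis by (simp only: half_twice_ennreal)
qed

end

lemma F1_zero: "F1 \<nu> m (\<lambda>x. 0) = 0" by (simp add: F1_def)
lemma F1_const: "F1 \<nu> m (\<lambda>x. c) = 0" by (simp add: F1_def)
lemma F1_neg: "F1 \<nu> m (\<lambda>x. - z x) = F1 \<nu> m z"
  unfolding F1_def by (simp add: abs_minus_commute)



lemma decay_eps:
  fixes N :: "real \<Rightarrow> real"
  assumes sT: "s0 < T" and cont: "continuous_on {s0..T} N"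
    and nn: "\<And>r. r \<in> {s0..T} \<Longrightarrow> 0 \<le> N r" and lam: "lam > 0"
    and loc: "\<And>c e. c \<in> {s0..<T} \<Longrightarrow> e > 0 \<Longrightarrow> \<exists>h0>0. \<forall>h. 0 < h \<longrightarrow> h \<le> h0 \<longrightarrow> c + h \<le> T \<longrightarrow>
                 (N (c + h))\<^sup>2 \<le> (N c)\<^sup>2 - 2 * h * (lam * N c - e)"
    and eta: "\<eta> > 0" and ep: "0 < \<epsilon>" "\<epsilon> < lam"
  shows "N T \<le> max \<eta> (N s0 - (lam - \<epsilon>) * (T - s0))"
proof -
  define \<psi> where "\<psi> r = max \<eta> (N s0 - (lam - \<epsilon>) * (r - s0))" for r
  define S where "S = {s0..T} \<inter> (\<lambda>r. N r - \<psi> r) -` {..0}"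
  have contd: "continuous_on {s0..T} (\<lambda>r. N r - \<psi> r)"
    unfolding \<psi>_def by (intro continuous_intros cont)
  have clS: "closed S" unfolding S_def
    by (rule continuous_closed_preimage[OF contd]) auto
  have s0S: "s0 \<in> S" using sT unfolding S_def \<psi>_def by auto
  have Ssub: "S \<subseteq> {s0..T}" unfolding S_def by auto
  have bdd: "bdd_above S" using Ssub by (meson bdd_above_Icc bdd_above_mono)
  define c where "c = Sup S"
  have cS: "c \<in> S" unfolding c_def using closed_contains_Sup[OF _ bdd clS] s0S by auto
  have upper: "\<And>r. r \<in> S \<Longrightarrow> r \<le> c" unfolding c_def using bdd by (simp add: cSup_upper)
  have cI: "c \<in> {s0..T}" using cS Ssub by auto
  have Nc: "N c \<le> \<psi> c" using cS unfolding S_def by auto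
  have cT: "c = T"
  proof (rule ccontr)
    assume "c \<noteq> T"
    hence cT: "c < T" using cI by auto
    show False
    proof (cases "N c < \<psi> c")
      case True
      have "continuous (at c within {s0..T}) (\<lambda>r. N r - \<psi> r)"
        using contd cI continuous_on_eq_continuous_within by blast
      then obtain d where d: "d > 0" and dH: "\<And>r. r \<in> {s0..T} \<Longrightarrow> dist r c < d \<Longrightarrow>
          dist (N r - \<psi> r) (N c - \<psi> c) < \<psi> c - N c"
        unfolding continuous_within_eps_delta using True by (metis diff_gt_0_iff_gt)
      define r where "r = min T (c + d / 2)"
      have rI: "r \<in> {s0..T}" using cI cT d unfolding r_def by auto
      have "dist r c < d" using cT d unfolding r_def dist_real_def by auto
      from dH[OF rI this] have "N r - \<psi> r < 0" unfolding dist_real_def by auto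
      hence "r \<in> S" using rI unfolding S_def by auto
      moreover have "r > c" using cT d unfolding r_def by auto
      ultimately show False using upper by fastforce
    next
      case False
      hence eq: "N c = \<psi> c" using Nc by auto
      have pos: "N c > 0" using eq eta unfolding \<psi>_def by auto
      obtain h0 where h0: "h0 > 0" and H: "\<And>h. 0 < h \<Longrightarrow> h \<le> h0 \<Longrightarrow> c + h \<le> T \<Longrightarrow>
          (N (c + h))\<^sup>2 \<le> (N c)\<^sup>2 - 2 * h * (lam * N c - \<epsilon> * N c)"
        using loc[of c "\<epsilon> * N c"] cI cT ep pos by auto
      define h where "h = min h0 (min (T - c) (N c / lam))"
      have hp: "h > 0" using h0 cT pos lam unfolding h_def by auto
      have hT: "c + h \<le> T" unfolding h_def by auto
      have "h \<le> N c / lam" unfolding h_def by auto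
      hence hl: "lam * h \<le> N c" using lam by (simp add: pos_le_divide_eq mult.commute)
      have "(lam - \<epsilon>) * h \<le> lam * h" using ep hp by (simp add: algebra_simps)
      hence base: "0 \<le> N c - (lam - \<epsilon>) * h" using hl by linarith
      have "(N (c + h))\<^sup>2 \<le> (N c)\<^sup>2 - 2 * h * (lam * N c - \<epsilon> * N c)"
        using H[OF hp _ hT] unfolding h_def by auto
      also have "\<dots> \<le> (N c - (lam - \<epsilon>) * h)\<^sup>2"
      proof -
        have "(N c - (lam - \<epsilon>) * h)\<^sup>2 = (N c)\<^sup>2 - 2 * h * (lam * N c - \<epsilon> * N c) + ((lam - \<epsilon>) * h)\<^sup>2"
          by (simp add: power2_eq_square algebra_simps)
        moreover have "0 \<le> ((lam - \<epsilon>) * h)\<^sup>2" by simp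
        ultimately show ?thesis by linarith
      qed
      finally have "N (c + h) \<le> N c - (lam - \<epsilon>) * h"
        using base by (rule power2_le_imp_le)
      also have "\<dots> \<le> \<psi> (c + h)"
      proof -
        have a0: "0 \<le> (lam - \<epsilon>) * h" using ep hp by simp
        have e1: "(lam - \<epsilon>) * (c + h - s0) = (lam - \<epsilon>) * (c - s0) + (lam - \<epsilon>) * h"
          by (simp add: algebra_simps)
        show ?thesis unfolding eq \<psi>_def e1 using a0 by (auto simp: max_def)
      qed
      finally have "c + h \<in> S" using cI hT hp unfolding S_def by auto
      thus False using upper hp by fastforce
    qed
  qed
  show ?thesis using Nc cT unfolding \<psi>_def by simp
qed

lemma decay:
  fixes N :: "real \<Rightarrow> real"
  assumes sT: "s0 < T" and cont: "continuous_on {s0..T} N"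
    and nn: "\<And>r. r \<in> {s0..T} \<Longrightarrow> 0 \<le> N r" and lam: "lam > 0"
    and loc: "\<And>c e. c \<in> {s0..<T} \<Longrightarrow> e > 0 \<Longrightarrow> \<exists>h0>0. \<forall>h. 0 < h \<longrightarrow> h \<le> h0 \<longrightarrow> c + h \<le> T \<longrightarrow>
                 (N (c + h))\<^sup>2 \<le> (N c)\<^sup>2 - 2 * h * (lam * N c - e)"
  shows "N T \<le> max 0 (N s0 - lam * (T - s0))"
proof (rule ccontr)
  assume A: "\<not> ?thesis"
  define g where "g = N T - max 0 (N s0 - lam * (T - s0))"
  have g: "g > 0" using A unfolding g_def by auto
  define \<epsilon> where "\<epsilon> = min (lam / 2) (g / (2 * (T - s0)))"
  have ep: "0 < \<epsilon>" "\<epsilon> < lam" using lam g sT unfolding \<epsilon>_def by auto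
  have "\<epsilon> \<le> g / (2 * (T - s0))" unfolding \<epsilon>_def by simp
  hence "\<epsilon> * (2 * (T - s0)) \<le> g" using sT by (simp add: pos_le_divide_eq)
  hence "\<epsilon> * (T - s0) \<le> g / 2" by (simp add: algebra_simps)
  have "N T \<le> max (g / 2) (N s0 - (lam - \<epsilon>) * (T - s0))"
    by (rule decay_eps[OF sT cont nn lam loc _ ep]) (use g in auto)
  also have "\<dots> \<le> max 0 (N s0 - lam * (T - s0)) + g / 2"
    using \<open>\<epsilon> * (T - s0) \<le> g / 2\<close> g by (auto simp: algebra_simps)
  finally have "N T \<le> max 0 (N s0 - lam * (T - s0)) + g / 2" .
  hence "N T \<le> max 0 (N s0 - lam * (T - s0)) + (N T - max 0 (N s0 - lam * (T - s0))) / 2"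
    unfolding g_def .
  moreover have "0 < N T - max 0 (N s0 - lam * (T - s0))" using g unfolding g_def .
  moreover obtain R where "R = max 0 (N s0 - lam * (T - s0))" by blast
  ultimately have "N T \<le> R + (N T - R) / 2" "0 < N T - R" by auto
  thus False by (simp add: field_simps)
qed



lemma subgrad_F1:
  assumes rws: "random_walk_space M m \<nu>" and rev: "reversible M m \<nu>" and fm: "finite_measure \<nu>"
    and sd: "subdiff_L2 \<nu> (F1 \<nu> m) u v"
  shows "\<exists>r. F1 \<nu> m u = ennreal r \<and> 0 \<le> r \<and> r \<le> (\<integral>x. v x * u x \<partial>\<nu>)"
    and "\<And>z. L2 \<nu> z \<Longrightarrow> \<bar>\<integral>x. v x * z x \<partial>\<nu>\<bar> \<le> (\<integral>x. \<bar>z x\<bar> \<partial>\<nu>)"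
    and "\<And>c. (\<integral>x. v x * c \<partial>\<nu>) = 0"
proof -
  interpret kern M \<nu> m using rws unfolding random_walk_space_def kern_def by auto
  have mM: "f \<in> borel_measurable M" if "f \<in> borel_measurable \<nu>" for f :: "'a \<Rightarrow> real"
    using that by (subst measurable_cong_sets[OF sets_nu[symmetric] refl])
  have Fsub: "\<And>a b. L2 \<nu> a \<Longrightarrow> L2 \<nu> b \<Longrightarrow> F1 \<nu> m (\<lambda>x. a x + b x) \<le> F1 \<nu> m a + F1 \<nu> m b"
  proof -
    fix a b assume a: "L2 \<nu> a" and b: "L2 \<nu> b"
    show "F1 \<nu> m (\<lambda>x. a x + b x) \<le> F1 \<nu> m a + F1 \<nu> m b"
      by (rule F1_sub[OF mM[OF L2_meas[OF a]] mM[OF L2_meas[OF b]]])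
  qed
  have Fb: "\<And>z. L2 \<nu> z \<Longrightarrow> F1 \<nu> m z \<le> ennreal (\<integral>x. \<bar>z x\<bar> \<partial>\<nu>)"
  proof -
    fix z assume z: "L2 \<nu> z"
    show "F1 \<nu> m z \<le> ennreal (\<integral>x. \<bar>z x\<bar> \<partial>\<nu>)"
      by (rule F1_bound[OF rev mM[OF L2_meas[OF z]] L2_int[OF fm z]])
  qed
  show "\<exists>r. F1 \<nu> m u = ennreal r \<and> 0 \<le> r \<and> r \<le> (\<integral>x. v x * u x \<partial>\<nu>)"
    apply (rule subgrad_props(1)[OF sd fm])
       apply (rule F1_zero)
      apply (erule (1) Fsub)
     apply (rule F1_const)
    apply (erule Fb)
    done
  show "\<And>c. (\<integral>x. v x * c \<partial>\<nu>) = 0"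
    apply (rule subgrad_props(3)[OF sd fm])
       apply (rule F1_zero)
      apply (erule (1) Fsub)
     apply (rule F1_const)
    apply (erule Fb)
    done
  have P2: "\<And>z. L2 \<nu> z \<Longrightarrow> (\<integral>x. v x * z x \<partial>\<nu>) \<le> (\<integral>x. \<bar>z x\<bar> \<partial>\<nu>)"
    apply (rule subgrad_props(2)[OF sd fm])
        apply (rule F1_zero)
       apply (erule (1) Fsub)
      apply (rule F1_const)
     apply (erule Fb)
    apply assumption
    done
  fix z assume z: "L2 \<nu> z"
  have a: "(\<integral>x. v x * z x \<partial>\<nu>) \<le> (\<integral>x. \<bar>z x\<bar> \<partial>\<nu>)" by (rule P2[OF z])
  have "(\<integral>x. v x * (- z x) \<partial>\<nu>) \<le> (\<integral>x. \<bar>- z x\<bar> \<partial>\<nu>)" by (rule P2[OF L2_neg[OF z]])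
  hence b: "- (\<integral>x. v x * z x \<partial>\<nu>) \<le> (\<integral>x. \<bar>z x\<bar> \<partial>\<nu>)" by simp
  show "\<bar>\<integral>x. v x * z x \<partial>\<nu>\<bar> \<le> (\<integral>x. \<bar>z x\<bar> \<partial>\<nu>)" using a b by linarith
qed

lemma le_eps_imp_le0:
  fixes D a :: real
  assumes "a \<ge> 0" and "\<And>e. e > 0 \<Longrightarrow> D \<le> a * e"
  shows "D \<le> 0"
proof (rule ccontr)
  assume "\<not> D \<le> 0"
  hence D: "D > 0" by simp
  define e where "e = D / (2 * (a + 1))"
  have e: "e > 0" using D assms(1) unfolding e_def by auto
  have "a * e < D"
  proof -
    have "a * e = D * (a / (2 * (a + 1)))" unfolding e_def by (simp add: field_simps)
    also have "a / (2 * (a + 1)) < 1" using assms(1) by (simp add: field_simps)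
    hence "D * (a / (2 * (a + 1))) < D * 1" using D by (intro mult_strict_left_mono) auto
    finally show ?thesis by simp
  qed
  thus False using assms(2)[OF e] by simp
qed

lemma tendsto_eps_delta:
  fixes f :: "real \<Rightarrow> real"
  assumes "(f \<longlongrightarrow> 0) (at t within S)" and "e > 0"
  shows "\<exists>d>0. \<forall>s\<in>S. s \<noteq> t \<longrightarrow> dist s t < d \<longrightarrow> \<bar>f s\<bar> < e"
proof -
  have "eventually (\<lambda>s. dist (f s) 0 < e) (at t within S)"
    using assms tendsto_iff by blast
  thus ?thesis unfolding eventually_at by auto
qed

theorem mainTheorem11:
  fixes M \<nu>1 \<nu>2 :: "'a measure"
    and m1 m2 :: "'a \<Rightarrow> 'a measure"
    and \<mu> :: "'a \<Rightarrow> real"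
    and lambda2 :: real
    and u0 :: "'a \<Rightarrow> real"
    and u :: "real \<Rightarrow> 'a \<Rightarrow> real"
  assumes rws1: "random_walk_space M m1 \<nu>1" and rev1: "reversible M m1 \<nu>1"
    and rws2: "random_walk_space M m2 \<nu>2" and rev2: "reversible M m2 \<nu>2"
    and \<mu>_meas: "\<mu> \<in> borel_measurable M"
    and \<mu>_nonneg: "\<forall>x\<in>space M. 0 \<le> \<mu> x"
    and density: "\<nu>2 = density \<nu>1 (\<lambda>x. ennreal (\<mu> x))"
    and \<mu>_Linf: "\<exists>C. AE x in \<nu>1. \<mu> x \<le> C"
    and \<mu>_pos: "AE x in \<nu>1. \<mu> x > 0"
    and finite: "emeasure \<nu>1 (space \<nu>1) < \<infinity>"
    and lambda2_pos: "lambda2 > 0"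
    and poincare: "\<forall>v. L2 \<nu>1 v \<longrightarrow>
                     ennreal (lambda2 * L2norm \<nu>1 (\<lambda>x. v x - mean \<nu>1 v)) \<le> F1 \<nu>1 m1 v"
    and u0_L2: "L2 \<nu>1 u0"
    and sol: "strong_solution \<nu>1 \<nu>2 m1 m2 \<mu> u0 u"
  shows "\<forall>t>0. L2norm \<nu>1 (\<lambda>x. u t x - mean \<nu>1 u0)
                \<le> max 0 (L2norm \<nu>1 (\<lambda>x. u0 x - mean \<nu>1 u0) - lambda2 * t)"
proof -
  have sets1: "sets \<nu>1 = sets M" using rws1 unfolding random_walk_space_def by auto
  have space1: "space \<nu>1 = space M" using sets1 by (rule sets_eq_imp_space_eq)
  have fm1: "finite_measure \<nu>1" using finite by (intro finite_measureI) auto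
  obtain C where C: "AE x in \<nu>1. \<mu> x \<le> C" using \<mu>_Linf by blast
  define C' where "C' = max C 0"
  have C'0: "C' \<ge> 0" unfolding C'_def by simp
  have \<mu>1[measurable]: "\<mu> \<in> borel_measurable \<nu>1"
    using \<mu>_meas by (subst measurable_cong_sets[OF sets1 refl])
  have \<mu>nn: "AE x in \<nu>1. 0 \<le> \<mu> x" using \<mu>_nonneg space1 by auto
  have \<mu>C: "AE x in \<nu>1. \<bar>\<mu> x\<bar> \<le> C'" using C \<mu>nn unfolding C'_def by auto
  have sets2: "sets \<nu>2 = sets \<nu>1" unfolding density by simp
  have meas21: "f \<in> borel_measurable \<nu>2 \<longleftrightarrow> f \<in> borel_measurable \<nu>1" for f :: "'a \<Rightarrow> real"
    by (rule arg_cong[where f="\<lambda>X. f \<in> X"], rule measurable_cong_sets[OF sets2 refl])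
  have int\<mu>: "integrable \<nu>1 \<mu>"
    by (rule Bochner_Integration.integrable_bound[of _ "\<lambda>x. C'"])
       (use \<mu>C in \<open>auto simp: finite_measure.integrable_const[OF fm1]\<close>)
  have fm2: "finite_measure \<nu>2"
  proof -
    have "integrable \<nu>2 (\<lambda>x. 1::real)" unfolding density
      using int\<mu> \<mu>nn by (subst integrable_density) auto
    hence "emeasure \<nu>2 (space \<nu>2) < \<infinity>" by (simp add: integrable_iff_bounded)
    thus ?thesis by (intro finite_measureI) auto
  qed
  have L2to2: "L2 \<nu>2 z \<and> (\<integral>x. \<bar>z x\<bar> \<partial>\<nu>2) \<le> C' * (\<integral>x. \<bar>z x\<bar> \<partial>\<nu>1)" if z: "L2 \<nu>1 z" for z
  proof -
    have zm[measurable]: "z \<in> borel_measurable \<nu>1" using L2_meas[OF z] .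
    have i1: "integrable \<nu>1 (\<lambda>x. \<mu> x * (z x)\<^sup>2)"
      by (rule Bochner_Integration.integrable_bound[of _ "\<lambda>x. C' * (z x)\<^sup>2"])
         (use \<mu>C L2_sq[OF z] in \<open>auto simp: abs_mult intro!: mult_right_mono\<close>)
    have "integrable \<nu>2 (\<lambda>x. (z x)\<^sup>2)" unfolding density
      using i1 \<mu>nn by (subst integrable_density) auto
    moreover have "z \<in> borel_measurable \<nu>2" using meas21 zm by simp
    ultimately have L: "L2 \<nu>2 z" unfolding L2_def by simp
    have az: "integrable \<nu>1 (\<lambda>x. \<bar>z x\<bar>)" using L2_int[OF fm1 z] by simp
    have i2: "integrable \<nu>1 (\<lambda>x. \<mu> x * \<bar>z x\<bar>)"
      by (rule Bochner_Integration.integrable_bound[of _ "\<lambda>x. C' * \<bar>z x\<bar>"])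
         (use \<mu>C az in \<open>auto simp: abs_mult intro!: mult_right_mono\<close>)
    have "(\<integral>x. \<bar>z x\<bar> \<partial>\<nu>2) = (\<integral>x. \<mu> x * \<bar>z x\<bar> \<partial>\<nu>1)"
      unfolding density using \<mu>nn by (subst integral_density) auto
    also have "\<dots> \<le> (\<integral>x. C' * \<bar>z x\<bar> \<partial>\<nu>1)"
      by (rule integral_mono_AE[OF i2]) (use az \<mu>C in \<open>auto intro!: mult_right_mono\<close>)
    also have "\<dots> = C' * (\<integral>x. \<bar>z x\<bar> \<partial>\<nu>1)" by simp
    finally show ?thesis using L by simp
  qed
  obtain g where W: "W12loc_deriv \<nu>1 u g"
    and AEopA: "AE t in lborel. t > 0 \<longrightarrow> opA \<nu>1 \<nu>2 m1 m2 \<mu> (u t) (\<lambda>x. - g t x)"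
    using sol unfolding strong_solution_def by blast
  have contu: "cont_L2 \<nu>1 u" and u00: "AE x in \<nu>1. u 0 x = u0 x"
    using sol unfolding strong_solution_def by auto
  have uL2: "\<And>t. t \<ge> 0 \<Longrightarrow> L2 \<nu>1 (u t)" using contu unfolding cont_L2_def by auto
  have gL2: "\<And>r. r > 0 \<Longrightarrow> L2 \<nu>1 (g r)" using W unfolding W12loc_deriv_def by auto
  have weak: "\<And>\<phi> s t. L2 \<nu>1 \<phi> \<Longrightarrow> 0 < s \<Longrightarrow> s \<le> t \<Longrightarrow>
      set_integrable lborel {s..t} (\<lambda>r. \<integral>x. g r x * \<phi> x \<partial>\<nu>1) \<and>
      (\<integral>x. (u t x - u s x) * \<phi> x \<partial>\<nu>1) = (LINT r:{s..t}|lborel. (\<integral>x. g r x * \<phi> x \<partial>\<nu>1))"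
    using W unfolding W12loc_deriv_def by blast
  define K where "K = 1 + C'"
  have K0: "K \<ge> 0" unfolding K_def using C'0 by simp
  have gfacts: "(\<forall>z. L2 \<nu>1 z \<longrightarrow> (\<integral>x. g r x * z x \<partial>\<nu>1) \<le> K * (\<integral>x. \<bar>z x\<bar> \<partial>\<nu>1)) \<and>
      (\<forall>c. (\<integral>x. g r x * c \<partial>\<nu>1) = 0) \<and>
      (\<integral>x. g r x * u r x \<partial>\<nu>1) \<le> - lambda2 * L2norm \<nu>1 (\<lambda>x. u r x - mean \<nu>1 (u r))"
    if r: "r > 0" and op: "opA \<nu>1 \<nu>2 m1 m2 \<mu> (u r) (\<lambda>x. - g r x)" for r
  proof -
    from op obtain v1 w
      where D1: "Delta1 \<nu>1 m1 (u r) (\<lambda>x. - v1 x)" and D2: "Delta1 \<nu>2 m2 (u r) w"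
      and AEv: "AE x in \<nu>1. - g r x = v1 x - \<mu> x * w x"
      unfolding opA_def by blast
    have sd1: "subdiff_L2 \<nu>1 (F1 \<nu>1 m1) (u r) v1" using D1 unfolding Delta1_def by simp
    have sd2: "subdiff_L2 \<nu>2 (F1 \<nu>2 m2) (u r) (\<lambda>x. - w x)" using D2 unfolding Delta1_def by simp
    have v1L: "L2 \<nu>1 v1" using sd1 unfolding subdiff_L2_def by simp
    have wL: "L2 \<nu>2 w" using sd2 L2_neg[of \<nu>2 "\<lambda>x. - w x"] unfolding subdiff_L2_def by simp
    have gL: "L2 \<nu>1 (g r)" using gL2[OF r] .
    have uL: "L2 \<nu>1 (u r)" using uL2 r by simp
    note S1 = subgrad_F1[OF rws1 rev1 fm1 sd1]
    note S2 = subgrad_F1[OF rws2 rev2 fm2 sd2]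
    have wm[measurable]: "w \<in> borel_measurable \<nu>1" using L2_meas[OF wL] meas21 by simp
    have gm[measurable]: "g r \<in> borel_measurable \<nu>1" using L2_meas[OF gL] .
    have v1m[measurable]: "v1 \<in> borel_measurable \<nu>1" using L2_meas[OF v1L] .
    have E: "(\<integral>x. g r x * z x \<partial>\<nu>1) = (\<integral>x. w x * z x \<partial>\<nu>2) - (\<integral>x. v1 x * z x \<partial>\<nu>1)"
      if z: "L2 \<nu>1 z" for z
    proof -
      have zm[measurable]: "z \<in> borel_measurable \<nu>1" using L2_meas[OF z] .
      have "(\<integral>x. w x * z x \<partial>\<nu>2) = (\<integral>x. \<mu> x * (w x * z x) \<partial>\<nu>1)"
        unfolding density using \<mu>nn by (subst integral_density) auto
      also have "\<dots> = (\<integral>x. g r x * z x + v1 x * z x \<partial>\<nu>1)"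
      proof (rule integral_cong_AE)
        show "AE x in \<nu>1. \<mu> x * (w x * z x) = g r x * z x + v1 x * z x"
        proof (rule AE_mp[OF AEv], rule AE_I2, rule impI)
          fix x assume "- g r x = v1 x - \<mu> x * w x"
          hence h: "\<mu> x * w x = v1 x + g r x" by linarith
          have "\<mu> x * (w x * z x) = (\<mu> x * w x) * z x" by simp
          also have "\<dots> = g r x * z x + v1 x * z x" unfolding h by (simp add: algebra_simps)
          finally show "\<mu> x * (w x * z x) = g r x * z x + v1 x * z x" .
        qed
      qed measurable
      also have "\<dots> = (\<integral>x. g r x * z x \<partial>\<nu>1) + (\<integral>x. v1 x * z x \<partial>\<nu>1)"
        using L2_mult_int[OF gL z] L2_mult_int[OF v1L z] by simp
      finally show ?thesis by simp
    qed
    have P1: "(\<integral>x. g r x * z x \<partial>\<nu>1) \<le> K * (\<integral>x. \<bar>z x\<bar> \<partial>\<nu>1)" if z: "L2 \<nu>1 z" for z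
    proof -
      note z2 = L2to2[OF z]
      have a: "\<bar>\<integral>x. - w x * z x \<partial>\<nu>2\<bar> \<le> (\<integral>x. \<bar>z x\<bar> \<partial>\<nu>2)" using S2(2) z2 by blast
      have a': "\<bar>\<integral>x. w x * z x \<partial>\<nu>2\<bar> \<le> (\<integral>x. \<bar>z x\<bar> \<partial>\<nu>2)" using a by simp
      have b: "\<bar>\<integral>x. v1 x * z x \<partial>\<nu>1\<bar> \<le> (\<integral>x. \<bar>z x\<bar> \<partial>\<nu>1)" using S1(2)[OF z] .
      have k: "K * (\<integral>x. \<bar>z x\<bar> \<partial>\<nu>1) = (\<integral>x. \<bar>z x\<bar> \<partial>\<nu>1) + C' * (\<integral>x. \<bar>z x\<bar> \<partial>\<nu>1)"
        unfolding K_def by (simp add: algebra_simps)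
      show ?thesis unfolding E[OF z] k using a' b z2 by linarith
    qed
    have P2: "(\<integral>x. g r x * c \<partial>\<nu>1) = 0" for c
    proof -
      have a: "(\<integral>x. - w x * c \<partial>\<nu>2) = 0" using S2(3) .
      hence a': "(\<integral>x. w x * c \<partial>\<nu>2) = 0" by simp
      have b: "(\<integral>x. v1 x * c \<partial>\<nu>1) = 0" using S1(3) .
      show ?thesis unfolding E[OF L2_const[OF fm1, of c]] a' b by simp
    qed
    have P3: "(\<integral>x. g r x * u r x \<partial>\<nu>1) \<le> - lambda2 * L2norm \<nu>1 (\<lambda>x. u r x - mean \<nu>1 (u r))"
    proof -
      obtain r2 where r2: "0 \<le> r2" "r2 \<le> (\<integral>x. - w x * u r x \<partial>\<nu>2)" using S2(1) by blast
      hence a: "(\<integral>x. w x * u r x \<partial>\<nu>2) \<le> 0" by simp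
      obtain r1 where r1: "F1 \<nu>1 m1 (u r) = ennreal r1" "0 \<le> r1" "r1 \<le> (\<integral>x. v1 x * u r x \<partial>\<nu>1)"
        using S1(1) by blast
      have "ennreal (lambda2 * L2norm \<nu>1 (\<lambda>x. u r x - mean \<nu>1 (u r))) \<le> ennreal r1"
        using poincare uL r1(1) by metis
      hence "lambda2 * L2norm \<nu>1 (\<lambda>x. u r x - mean \<nu>1 (u r)) \<le> r1" using r1(2) ennreal_le_iff by blast
      thus ?thesis unfolding E[OF uL] using a r1(3) by linarith
    qed
    show ?thesis using P1 P2 P3 by blast
  qed
  have AEg: "AE r in lborel. r > 0 \<longrightarrow>
      (\<forall>z. L2 \<nu>1 z \<longrightarrow> (\<integral>x. g r x * z x \<partial>\<nu>1) \<le> K * (\<integral>x. \<bar>z x\<bar> \<partial>\<nu>1)) \<and>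
      (\<forall>c. (\<integral>x. g r x * c \<partial>\<nu>1) = 0) \<and>
      (\<integral>x. g r x * u r x \<partial>\<nu>1) \<le> - lambda2 * L2norm \<nu>1 (\<lambda>x. u r x - mean \<nu>1 (u r))"
  proof (rule AE_mp[OF AEopA], rule AE_I2, intro impI)
    fix r assume "r > 0 \<longrightarrow> opA \<nu>1 \<nu>2 m1 m2 \<mu> (u r) (\<lambda>x. - g r x)" "r > 0"
    thus "(\<forall>z. L2 \<nu>1 z \<longrightarrow> (\<integral>x. g r x * z x \<partial>\<nu>1) \<le> K * (\<integral>x. \<bar>z x\<bar> \<partial>\<nu>1)) \<and>
      (\<forall>c. (\<integral>x. g r x * c \<partial>\<nu>1) = 0) \<and>
      (\<integral>x. g r x * u r x \<partial>\<nu>1) \<le> - lambda2 * L2norm \<nu>1 (\<lambda>x. u r x - mean \<nu>1 (u r))"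
      using gfacts by blast
  qed
  have intu: "\<And>t. t \<ge> 0 \<Longrightarrow> integrable \<nu>1 (u t)" using uL2 L2_int[OF fm1] by blast
  have int_eq: "(\<integral>x. u t x \<partial>\<nu>1) = (\<integral>x. u s x \<partial>\<nu>1)" if s: "0 < s" "s \<le> t" for s t
  proof -
    note w1 = weak[OF L2_const[OF fm1, of 1] s]
    have "(LINT r:{s..t}|lborel. (\<integral>x. g r x * 1 \<partial>\<nu>1)) = 0"
      unfolding set_lebesgue_integral_def
    proof (rule integral_eq_zero_AE)
      show "AE r in lborel. indicator {s..t} r *\<^sub>R (\<integral>x. g r x * 1 \<partial>\<nu>1) = 0"
      proof (rule AE_mp[OF AEg], rule AE_I2, rule impI)
        fix r assume H: "r > 0 \<longrightarrow> (\<forall>z. L2 \<nu>1 z \<longrightarrow> (\<integral>x. g r x * z x \<partial>\<nu>1) \<le> K * (\<integral>x. \<bar>z x\<bar> \<partial>\<nu>1)) \<and>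
          (\<forall>c. (\<integral>x. g r x * c \<partial>\<nu>1) = 0) \<and>
          (\<integral>x. g r x * u r x \<partial>\<nu>1) \<le> - lambda2 * L2norm \<nu>1 (\<lambda>x. u r x - mean \<nu>1 (u r))"
        show "indicator {s..t} r *\<^sub>R (\<integral>x. g r x * 1 \<partial>\<nu>1) = 0"
        proof (cases "r \<in> {s..t}")
          case True
          hence "r > 0" using s by auto
          hence "(\<integral>x. g r x * 1 \<partial>\<nu>1) = 0" using H by blast
          thus ?thesis by simp
        qed simp
      qed
    qed
    hence "(\<integral>x. (u t x - u s x) * 1 \<partial>\<nu>1) = 0" using w1 by simp
    hence "(\<integral>x. u t x - u s x \<partial>\<nu>1) = 0" by simp
    thus ?thesis using intu[of t] intu[of s] s by simp
  qed
  have I0: "(\<integral>x. u 0 x \<partial>\<nu>1) = (\<integral>x. u0 x \<partial>\<nu>1)"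
    by (rule integral_cong_AE) (use u00 uL2[of 0] u0_L2 in \<open>auto dest: L2_meas\<close>)
  define Vs where "Vs = sqrt (measure \<nu>1 (space \<nu>1))"
  have Vs0: "Vs \<ge> 0" unfolding Vs_def by simp
  have L2n0: "L2norm \<nu>1 (\<lambda>x. u t x - u t x) = 0" for t unfolding L2norm_def by simp
  have ucont: "\<exists>d>0. \<forall>s\<ge>0. \<bar>s - t\<bar> < d \<longrightarrow> L2norm \<nu>1 (\<lambda>x. u s x - u t x) < e"
    if t: "t \<ge> 0" and e: "e > 0" for t e
  proof -
    have "((\<lambda>s. L2norm \<nu>1 (\<lambda>x. u s x - u t x)) \<longlongrightarrow> 0) (at t within {0..})"
      using contu t unfolding cont_L2_def by auto
    from tendsto_eps_delta[OF this e] obtain d where d: "d > 0"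
      and H: "\<forall>s\<in>{0..}. s \<noteq> t \<longrightarrow> dist s t < d \<longrightarrow> \<bar>L2norm \<nu>1 (\<lambda>x. u s x - u t x)\<bar> < e" by blast
    have "\<forall>s\<ge>0. \<bar>s - t\<bar> < d \<longrightarrow> L2norm \<nu>1 (\<lambda>x. u s x - u t x) < e"
    proof (intro allI impI)
      fix s :: real assume s: "s \<ge> 0" "\<bar>s - t\<bar> < d"
      show "L2norm \<nu>1 (\<lambda>x. u s x - u t x) < e"
      proof (cases "s = t")
        case True thus ?thesis using L2n0 e by simp
      next
        case False thus ?thesis using H s L2norm_nonneg[of \<nu>1 "\<lambda>x. u s x - u t x"]
          by (auto simp: dist_real_def)
      qed
    qed
    thus ?thesis using d by blast
  qed
  have mean_eq: "mean \<nu>1 (u t) = mean \<nu>1 u0" if t: "t > 0" for t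
  proof -
    have "\<bar>(\<integral>x. u t x \<partial>\<nu>1) - (\<integral>x. u0 x \<partial>\<nu>1)\<bar> \<le> 0"
    proof (rule le_eps_imp_le0[OF Vs0])
      fix e :: real assume e: "e > 0"
      obtain d where d: "d > 0" and dH: "\<forall>s\<ge>0. \<bar>s - 0\<bar> < d \<longrightarrow> L2norm \<nu>1 (\<lambda>x. u s x - u 0 x) < e"
        using ucont[of 0 e] e by auto
      define s where "s = min t (d / 2)"
      have s: "0 < s" "s \<le> t" "\<bar>s - 0\<bar> < d" using t d unfolding s_def by auto
      have "\<bar>(\<integral>x. u s x \<partial>\<nu>1) - (\<integral>x. u 0 x \<partial>\<nu>1)\<bar> = \<bar>\<integral>x. u s x - u 0 x \<partial>\<nu>1\<bar>"
        using intu[of s] intu[of 0] s by simp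
      also have "\<dots> \<le> (\<integral>x. \<bar>u s x - u 0 x\<bar> \<partial>\<nu>1)" by (rule integral_abs_bound)
      also have "\<dots> \<le> Vs * L2norm \<nu>1 (\<lambda>x. u s x - u 0 x)"
        unfolding Vs_def using L1_le_L2[OF fm1 L2_diff[OF uL2 uL2]] s by simp
      also have "\<dots> \<le> Vs * e"
      proof -
        have "L2norm \<nu>1 (\<lambda>x. u s x - u 0 x) < e" using dH s by simp
        thus ?thesis using Vs0 by (intro mult_left_mono) auto
      qed
      finally show "\<bar>(\<integral>x. u t x \<partial>\<nu>1) - (\<integral>x. u0 x \<partial>\<nu>1)\<bar> \<le> Vs * e"
        using int_eq[OF s(1,2)] I0 by simp
    qed
    thus ?thesis unfolding mean_def by simp
  qed
  define c0 where "c0 = mean \<nu>1 u0"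
  define N where "N t = L2norm \<nu>1 (\<lambda>x. u t x - c0)" for t
  have L2c: "L2 \<nu>1 (\<lambda>x. c0)" by (rule L2_const[OF fm1])
  have Nnn: "N t \<ge> 0" for t unfolding N_def by (rule L2norm_nonneg)
  have L2sym: "L2norm \<nu>1 (\<lambda>x. u s x - u t x) = L2norm \<nu>1 (\<lambda>x. u t x - u s x)" for s t
    unfolding L2norm_def by (simp add: power2_commute)
  have Ndiff: "\<bar>N s - N t\<bar> \<le> L2norm \<nu>1 (\<lambda>x. u s x - u t x)" if st: "s \<ge> 0" "t \<ge> 0" for s t
  proof -
    have a: "N s \<le> L2norm \<nu>1 (\<lambda>x. u s x - u t x) + N t"
      unfolding N_def by (rule L2norm_diff_tri[OF uL2[OF st(1)] uL2[OF st(2)] L2c])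
    have b: "N t \<le> L2norm \<nu>1 (\<lambda>x. u t x - u s x) + N s"
      unfolding N_def by (rule L2norm_diff_tri[OF uL2[OF st(2)] uL2[OF st(1)] L2c])
    show ?thesis using a b L2sym[of s t] by linarith
  qed
  have Ncont: "continuous_on {0..} N"
    unfolding continuous_on_iff
  proof (intro ballI allI impI)
    fix t e :: real assume t: "t \<in> {0..}" and e: "e > 0"
    obtain d where d: "d > 0" and dH: "\<forall>s\<ge>0. \<bar>s - t\<bar> < d \<longrightarrow> L2norm \<nu>1 (\<lambda>x. u s x - u t x) < e"
      using ucont[of t e] t e by auto
    show "\<exists>d>0. \<forall>x'\<in>{0..}. dist x' t < d \<longrightarrow> dist (N x') (N t) < e"
    proof (intro exI[of _ d] conjI ballI impI d)
      fix s assume s: "s \<in> {0..}" "dist s t < d"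
      have "\<bar>N s - N t\<bar> \<le> L2norm \<nu>1 (\<lambda>x. u s x - u t x)" using Ndiff s t by auto
      also have "\<dots> < e" using dH s by (auto simp: dist_real_def)
      finally show "dist (N s) (N t) < e" by (simp add: dist_real_def)
    qed
  qed
  have local: "(N t)\<^sup>2 - (N s)\<^sup>2 \<le> 2 * ((t - s) * (- lambda2 * A + K * B))"
    if st: "0 < s" "s \<le> t" and AB: "\<forall>r\<in>{s..t}. A \<le> N r \<and> (\<integral>x. \<bar>u t x - u r x\<bar> \<partial>\<nu>1) \<le> B"
    for s t A B
  proof -
    have uLs: "L2 \<nu>1 (u s)" and uLt: "L2 \<nu>1 (u t)" using uL2 st by auto
    define \<phi> where "\<phi> = (\<lambda>x. u t x - c0)"
    have \<phi>L: "L2 \<nu>1 \<phi>" unfolding \<phi>_def by (rule L2_diff[OF uLt L2c])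
    have "(N t)\<^sup>2 - (N s)\<^sup>2 = (\<integral>x. (u t x - c0)\<^sup>2 \<partial>\<nu>1) - (\<integral>x. (u s x - c0)\<^sup>2 \<partial>\<nu>1)"
      unfolding N_def L2norm_sq ..
    also have "\<dots> = (\<integral>x. (u t x - c0)\<^sup>2 - (u s x - c0)\<^sup>2 \<partial>\<nu>1)"
      using L2_sq[OF L2_diff[OF uLt L2c]] L2_sq[OF L2_diff[OF uLs L2c]] by simp
    also have "\<dots> \<le> (\<integral>x. 2 * ((u t x - u s x) * \<phi> x) \<partial>\<nu>1)"
    proof (rule integral_mono)
      show "integrable \<nu>1 (\<lambda>x. (u t x - c0)\<^sup>2 - (u s x - c0)\<^sup>2)"
        using L2_sq[OF L2_diff[OF uLt L2c]] L2_sq[OF L2_diff[OF uLs L2c]] by simp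
      show "integrable \<nu>1 (\<lambda>x. 2 * ((u t x - u s x) * \<phi> x))"
        using L2_mult_int[OF L2_diff[OF uLt uLs] \<phi>L] by simp
      fix x
      have "2 * ((u t x - u s x) * \<phi> x) - ((u t x - c0)\<^sup>2 - (u s x - c0)\<^sup>2) = (u t x - u s x)\<^sup>2"
        unfolding \<phi>_def by (simp add: power2_eq_square algebra_simps)
      thus "(u t x - c0)\<^sup>2 - (u s x - c0)\<^sup>2 \<le> 2 * ((u t x - u s x) * \<phi> x)"
        by (metis diff_ge_0_iff_ge zero_le_power2)
    qed
    also have "\<dots> = 2 * (LINT r:{s..t}|lborel. (\<integral>x. g r x * \<phi> x \<partial>\<nu>1))"
      using weak[OF \<phi>L st] by simp
    also have "\<dots> \<le> 2 * ((t - s) * (- lambda2 * A + K * B))"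
    proof -
      have si: "set_integrable lborel {s..t} (\<lambda>r. \<integral>x. g r x * \<phi> x \<partial>\<nu>1)" using weak[OF \<phi>L st] by blast
      have sc: "set_integrable lborel {s..t} (\<lambda>r. - lambda2 * A + K * B)"
        unfolding set_integrable_def
        using st by (intro integrable_scaleR_left integrable_real_indicator) (auto simp: emeasure_lborel_Icc)
      have "(LINT r:{s..t}|lborel. (\<integral>x. g r x * \<phi> x \<partial>\<nu>1)) \<le> (LINT r:{s..t}|lborel. (- lambda2 * A + K * B))"
      proof (rule set_integral_mono_AE[OF si sc])
        show "AE r\<in>{s..t} in lborel. (\<integral>x. g r x * \<phi> x \<partial>\<nu>1) \<le> - lambda2 * A + K * B"
        proof (rule AE_mp[OF AEg], rule AE_I2, intro impI)
          fix r assume H: "r > 0 \<longrightarrow> (\<forall>z. L2 \<nu>1 z \<longrightarrow> (\<integral>x. g r x * z x \<partial>\<nu>1) \<le> K * (\<integral>x. \<bar>z x\<bar> \<partial>\<nu>1)) \<and>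
              (\<forall>c. (\<integral>x. g r x * c \<partial>\<nu>1) = 0) \<and>
              (\<integral>x. g r x * u r x \<partial>\<nu>1) \<le> - lambda2 * L2norm \<nu>1 (\<lambda>x. u r x - mean \<nu>1 (u r))"
            and rI: "r \<in> {s..t}"
          have r0: "r > 0" using rI st by auto
          have uLr: "L2 \<nu>1 (u r)" using uL2 r0 by simp
          have gL: "L2 \<nu>1 (g r)" using gL2[OF r0] .
          have h1: "(\<integral>x. g r x * (u t x - u r x) \<partial>\<nu>1) \<le> K * (\<integral>x. \<bar>u t x - u r x\<bar> \<partial>\<nu>1)"
            using H r0 L2_diff[OF uLt uLr] by blast
          have h2: "(\<integral>x. g r x * c0 \<partial>\<nu>1) = 0" using H r0 by blast
          have h3: "(\<integral>x. g r x * u r x \<partial>\<nu>1) \<le> - lambda2 * N r"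
            using H r0 mean_eq[OF r0] unfolding N_def c0_def by auto
          have split: "(\<integral>x. g r x * \<phi> x \<partial>\<nu>1) =
              (\<integral>x. g r x * u r x \<partial>\<nu>1) + (\<integral>x. g r x * (u t x - u r x) \<partial>\<nu>1) - (\<integral>x. g r x * c0 \<partial>\<nu>1)"
          proof -
            have "(\<integral>x. g r x * \<phi> x \<partial>\<nu>1) = (\<integral>x. (g r x * u r x + g r x * (u t x - u r x)) - g r x * c0 \<partial>\<nu>1)"
              unfolding \<phi>_def by (rule Bochner_Integration.integral_cong) (auto simp: algebra_simps)
            also have "\<dots> = (\<integral>x. g r x * u r x + g r x * (u t x - u r x) \<partial>\<nu>1) - (\<integral>x. g r x * c0 \<partial>\<nu>1)"
              using L2_mult_int[OF gL uLr] L2_mult_int[OF gL L2_diff[OF uLt uLr]] L2_mult_int[OF gL L2c]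
              by (intro Bochner_Integration.integral_diff Bochner_Integration.integrable_add) auto
            also have "(\<integral>x. g r x * u r x + g r x * (u t x - u r x) \<partial>\<nu>1) =
                (\<integral>x. g r x * u r x \<partial>\<nu>1) + (\<integral>x. g r x * (u t x - u r x) \<partial>\<nu>1)"
              using L2_mult_int[OF gL uLr] L2_mult_int[OF gL L2_diff[OF uLt uLr]]
              by (rule Bochner_Integration.integral_add)
            finally show ?thesis .
          qed
          have A: "A \<le> N r" and B: "(\<integral>x. \<bar>u t x - u r x\<bar> \<partial>\<nu>1) \<le> B" using AB rI by auto
          have "- lambda2 * N r \<le> - lambda2 * A" using A lambda2_pos by simp
          moreover have "K * (\<integral>x. \<bar>u t x - u r x\<bar> \<partial>\<nu>1) \<le> K * B" using B K0 by (rule mult_left_mono)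
          ultimately show "(\<integral>x. g r x * \<phi> x \<partial>\<nu>1) \<le> - lambda2 * A + K * B"
            unfolding split using h1 h2 h3 by linarith
        qed
      qed
      also have "\<dots> = (t - s) * (- lambda2 * A + K * B)"
        using st by (subst set_integral_const) auto
      finally show ?thesis by simp
    qed
    finally show ?thesis .
  qed
  have loc: "\<exists>h0>0. \<forall>h. 0 < h \<longrightarrow> h \<le> h0 \<longrightarrow> c + h \<le> T \<longrightarrow>
      (N (c + h))\<^sup>2 \<le> (N c)\<^sup>2 - 2 * h * (lambda2 * N c - e)"
    if c: "c > 0" and e: "e > 0" for c e T
  proof -
    define den where "den = lambda2 + 2 * K * Vs + 1"
    have den: "den > 0" unfolding den_def using lambda2_pos K0 Vs0
      by (simp add: add_pos_nonneg)
    define \<epsilon>1 where "\<epsilon>1 = e / den"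
    have \<epsilon>1: "\<epsilon>1 > 0" unfolding \<epsilon>1_def using e den by simp
    have "\<epsilon>1 * den = e" unfolding \<epsilon>1_def using den by simp
    hence \<epsilon>1e: "(lambda2 + 2 * K * Vs) * \<epsilon>1 \<le> e" unfolding den_def using \<epsilon>1
      by (simp add: algebra_simps)
    obtain d where d: "d > 0" and dH: "\<forall>s\<ge>0. \<bar>s - c\<bar> < d \<longrightarrow> L2norm \<nu>1 (\<lambda>x. u s x - u c x) < \<epsilon>1"
      using ucont[of c \<epsilon>1] c \<epsilon>1 by auto
    show ?thesis
    proof (intro exI[of _ "d / 2"] conjI allI impI)
      show "d / 2 > 0" using d by simp
      fix h assume h: "0 < h" "h \<le> d / 2" "c + h \<le> T"
      have AB: "\<forall>r\<in>{c..c+h}. N c - \<epsilon>1 \<le> N r \<and> (\<integral>x. \<bar>u (c+h) x - u r x\<bar> \<partial>\<nu>1) \<le> 2 * Vs * \<epsilon>1"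
      proof
        fix r assume r: "r \<in> {c..c+h}"
        have r0: "r \<ge> 0" "\<bar>r - c\<bar> < d" using r c h d by auto
        have l1: "L2norm \<nu>1 (\<lambda>x. u r x - u c x) < \<epsilon>1" using dH r0 by blast
        have "\<bar>N r - N c\<bar> \<le> L2norm \<nu>1 (\<lambda>x. u r x - u c x)" using Ndiff r0 c by simp
        hence A: "N c - \<epsilon>1 \<le> N r" using l1 by linarith
        have l2: "L2norm \<nu>1 (\<lambda>x. u (c+h) x - u c x) < \<epsilon>1" using dH c h d by auto
        have "(\<integral>x. \<bar>u (c+h) x - u r x\<bar> \<partial>\<nu>1) \<le> Vs * L2norm \<nu>1 (\<lambda>x. u (c+h) x - u r x)"
          unfolding Vs_def using L1_le_L2[OF fm1 L2_diff[OF uL2 uL2]] c h r0 by simp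
        also have "\<dots> \<le> Vs * (L2norm \<nu>1 (\<lambda>x. u (c+h) x - u c x) + L2norm \<nu>1 (\<lambda>x. u c x - u r x))"
          using L2norm_diff_tri[OF uL2 uL2 uL2, of "c+h" c r] c h r0 Vs0
          by (intro mult_left_mono) auto
        also have "\<dots> \<le> Vs * (\<epsilon>1 + \<epsilon>1)"
          using l1 l2 L2sym[of c r] Vs0 by (intro mult_left_mono) auto
        finally have B: "(\<integral>x. \<bar>u (c+h) x - u r x\<bar> \<partial>\<nu>1) \<le> 2 * Vs * \<epsilon>1" by simp
        show "N c - \<epsilon>1 \<le> N r \<and> (\<integral>x. \<bar>u (c+h) x - u r x\<bar> \<partial>\<nu>1) \<le> 2 * Vs * \<epsilon>1" using A B by simp
      qed
      have L: "(N (c+h))\<^sup>2 - (N c)\<^sup>2 \<le> 2 * (((c+h) - c) * (- lambda2 * (N c - \<epsilon>1) + K * (2 * Vs * \<epsilon>1)))"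
        by (rule local[OF c _ AB]) (use h in simp)
      have eq: "2 * (((c+h) - c) * (- lambda2 * (N c - \<epsilon>1) + K * (2 * Vs * \<epsilon>1)))
          = 2 * h * ((lambda2 + 2 * K * Vs) * \<epsilon>1) - 2 * h * (lambda2 * N c)"
        by (simp add: algebra_simps)
      have "2 * h * ((lambda2 + 2 * K * Vs) * \<epsilon>1) \<le> 2 * h * e"
        using \<epsilon>1e h by (intro mult_left_mono) auto
      hence "(N (c+h))\<^sup>2 - (N c)\<^sup>2 \<le> 2 * h * e - 2 * h * (lambda2 * N c)" using L eq by linarith
      thus "(N (c + h))\<^sup>2 \<le> (N c)\<^sup>2 - 2 * h * (lambda2 * N c - e)"
        by (simp add: algebra_simps)
    qed
  qed
  have key: "N T \<le> max 0 (N s0 - lambda2 * (T - s0))" if st: "0 < s0" "s0 < T" for s0 T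
  proof (rule decay[OF st(2)])
    show "continuous_on {s0..T} N" using continuous_on_subset[OF Ncont] st by auto
    show "\<And>r. r \<in> {s0..T} \<Longrightarrow> 0 \<le> N r" by (rule Nnn)
    show "lambda2 > 0" by (rule lambda2_pos)
    fix c e :: real assume "c \<in> {s0..<T}" "e > 0"
    thus "\<exists>h0>0. \<forall>h. 0 < h \<longrightarrow> h \<le> h0 \<longrightarrow> c + h \<le> T \<longrightarrow>
        (N (c + h))\<^sup>2 \<le> (N c)\<^sup>2 - 2 * h * (lambda2 * N c - e)"
      using loc[of c e T] st by auto
  qed
  have um0[measurable]: "u 0 \<in> borel_measurable \<nu>1" using L2_meas[OF uL2[of 0]] by simp
  have u0m[measurable]: "u0 \<in> borel_measurable \<nu>1" using L2_meas[OF u0_L2] .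
  have N0: "N 0 = L2norm \<nu>1 (\<lambda>x. u0 x - mean \<nu>1 u0)"
  proof -
    have "(\<integral>x. (u 0 x - c0)\<^sup>2 \<partial>\<nu>1) = (\<integral>x. (u0 x - c0)\<^sup>2 \<partial>\<nu>1)"
    proof (rule integral_cong_AE)
      show "AE x in \<nu>1. (u 0 x - c0)\<^sup>2 = (u0 x - c0)\<^sup>2" using u00 by auto
    qed measurable
    thus ?thesis unfolding N_def L2norm_def c0_def by simp
  qed
  show ?thesis
  proof (intro allI impI)
    fix T :: real assume T: "T > 0"
    have "N T \<le> max 0 (N 0 - lambda2 * T)"
    proof (rule ccontr)
      assume A: "\<not> N T \<le> max 0 (N 0 - lambda2 * T)"
      obtain R where R: "R = max 0 (N 0 - lambda2 * T)" by blast
      obtain q where q: "q = (N T - R) / 4" by blast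
      have q0: "q > 0" using A R q by simp
      obtain d where d: "d > 0" and dH: "\<forall>s\<ge>0. \<bar>s - 0\<bar> < d \<longrightarrow> L2norm \<nu>1 (\<lambda>x. u s x - u 0 x) < 2 * q"
        using ucont[of 0 "2 * q"] q0 by auto
      define s0 where "s0 = min (d / 2) (min (T / 2) (q / lambda2))"
      have s0: "0 < s0" "s0 < T" "\<bar>s0 - 0\<bar> < d" using d T q0 lambda2_pos unfolding s0_def by auto
      have "s0 \<le> q / lambda2" unfolding s0_def by simp
      hence ls: "lambda2 * s0 \<le> q" using lambda2_pos by (simp add: pos_le_divide_eq mult.commute)
      have "\<bar>N s0 - N 0\<bar> \<le> L2norm \<nu>1 (\<lambda>x. u s0 x - u 0 x)" using Ndiff s0 by simp
      also have "\<dots> < 2 * q" using dH s0 by simp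
      finally have ns: "N s0 < N 0 + 2 * q" by linarith
      have ex: "lambda2 * (T - s0) = lambda2 * T - lambda2 * s0" by (simp add: algebra_simps)
      have "N T \<le> max 0 (N s0 - lambda2 * (T - s0))" by (rule key[OF s0(1,2)])
      also have "\<dots> \<le> R + 3 * q" unfolding R ex using ns ls q0 by (auto simp: max_def)
      finally have "N T \<le> R + 3 * q" .
      moreover have "N T = R + 4 * q" using q by simp
      ultimately show False using q0 by linarith
    qed
    thus "L2norm \<nu>1 (\<lambda>x. u T x - mean \<nu>1 u0) \<le> max 0 (L2norm \<nu>1 (\<lambda>x. u0 x - mean \<nu>1 u0) - lambda2 * T)"
      using N0 unfolding N_def c0_def by simp
  qed
qed


end
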